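(* Let $p_0$ be a pmf on $\mathbb{N}$ whose support is exactly $\{0,\dots,S\}$ for some integer $S>0$ (so $p_0(k)>0$ for $k\le S$ and $p_0(k)=0$ for $k>S$). Let $g_0=(g_0(0),\dots,g_0(S+1))$ be a centered Gaussian vector in $\mathbb{R}^{S+2}$ with $\mathrm{Cov}(g_0(i),g_0(j))=\mathbb{1}_{\{i=j\}}p_0(i)-p_0(i)p_0(j)$ for $i,j=0,\dots,S+1$. Then $(\Delta g_0(1),\dots,\Delta g_0(S))$, where $\Delta g_0(k)=g_0(k+1)-2g_0(k)+g_0(k-1)$, is a centered Gaussian vector with invertible dispersion matrix. *)

theory Defs
  imports "HOL-Probability.Probability" "Jordan_Normal_Form.Matrix"
begin

definition centered_gaussian_rv :: "'a measure \<Rightarrow> ('a \<Rightarrow> real) \<Rightarrow> bool" where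
  "centered_gaussian_rv M X \<longleftrightarrow> X \<in> borel_measurable M \<and>
     (\<exists>\<sigma>\<ge>0. distr M borel X =
        (if \<sigma> = 0 then return borel 0 else density lborel (normal_density 0 \<sigma>)))"

definition centered_gaussian_vec :: "'a measure \<Rightarrow> nat set \<Rightarrow> ('a \<Rightarrow> nat \<Rightarrow> real) \<Rightarrow> bool" where
  "centered_gaussian_vec M I X \<longleftrightarrow> finite I \<and>
     (\<forall>c. centered_gaussian_rv M (\<lambda>\<omega>. \<Sum>i\<in>I. c i * X \<omega> i))"

definition cov :: "'a measure \<Rightarrow> ('a \<Rightarrow> real) \<Rightarrow> ('a \<Rightarrow> real) \<Rightarrow> real" where
  "cov M X Y = integral\<^sup>L M (\<lambda>\<omega>. (X \<omega> - integral\<^sup>L M X) * (Y \<omega> - integral\<^sup>L M Y))"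

definition Delta2 :: "(nat \<Rightarrow> real) \<Rightarrow> nat \<Rightarrow> real" where
  "Delta2 g k = g (k + 1) - 2 * g k + g (k - 1)"

end

theory Submission
  imports Defs "Jordan_Normal_Form.Determinant"
begin


definition Ecoef :: "nat \<Rightarrow> nat \<Rightarrow> real" where
  "Ecoef k i = (if i = k+1 then 1 else 0) - 2*(if i = k then 1 else 0) + (if i = k - 1 then 1 else 0)"

lemma sum_shift_delta:
  fixes f :: "nat \<Rightarrow> real"
  shows "(\<Sum>k<S. (if i = k + c then f k else 0)) = (if c \<le> i \<and> i - c < S then f (i - c) else 0)"
proof (cases "c \<le> i")
  case True
  have "(\<Sum>k<S. (if i = k + c then f k else 0)) = (\<Sum>k<S. (if k = i - c then f k else 0))"
    by (rule sum.cong) (use True in auto)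
  also have "\<dots> = (if i - c < S then f (i - c) else 0)"
    by (simp add: sum.delta')
  finally show ?thesis using True by simp
next
  case False
  then show ?thesis by (intro trans[OF sum.neutral]) auto
qed

lemma d_formula:
  fixes v :: "nat \<Rightarrow> real"
  shows "(\<Sum>k<S. v k * Ecoef (k+1) i) =
     (if i < S then v i else 0) - 2 * (if 1 \<le> i \<and> i - 1 < S then v (i - 1) else 0)
     + (if 2 \<le> i \<and> i - 2 < S then v (i - 2) else 0)"
proof -
  have "(\<Sum>k<S. v k * Ecoef (k+1) i) =
     (\<Sum>k<S. (if i = k + 2 then v k else 0)) - 2 * (\<Sum>k<S. (if i = k + 1 then v k else 0))
     + (\<Sum>k<S. (if i = k + 0 then v k else 0))"
  proof -
    have pt: "v k * Ecoef (k+1) i = (if i = k + 2 then v k else 0) - 2 * (if i = k + 1 then v k else 0)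
       + (if i = k + 0 then v k else 0)" for k
      unfolding Ecoef_def by auto
    show ?thesis by (simp only: pt sum.distrib sum_subtractf sum_distrib_left)
  qed
  then show ?thesis by (simp only: sum_shift_delta) simp
qed

lemma recur:
  fixes w :: "nat \<Rightarrow> real"
  assumes "\<And>i. i \<le> S \<Longrightarrow> w i - 2 * (if 1 \<le> i then w (i - 1) else 0) + (if 2 \<le> i then w (i - 2) else 0) = m"
  shows "i \<le> S \<Longrightarrow> w i = m * (real i + 1) * (real i + 2) / 2"
proof (induction i rule: less_induct)
  case (less i)
  show ?case
  proof (cases i)
    case 0
    then show ?thesis using assms[of 0] by simp
  next
    case (Suc n)
    show ?thesis
    proof (cases n)
      case 0
      have "w 0 = m" using assms[of 0] by simp
      then show ?thesis using assms[of 1] Suc 0 less.prems by simp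
    next
      case (Suc n')
      have i: "i = n' + 2" using \<open>i = Suc n\<close> Suc by simp
      have a: "w (n'+1) = m * (real (n'+1) + 1) * (real (n'+1) + 2) / 2"
        using less.IH[of "n'+1"] less.prems i by simp
      have b: "w n' = m * (real n' + 1) * (real n' + 2) / 2"
        using less.IH[of "n'"] less.prems i by simp
      have c: "w (n'+2) - 2 * w (n'+1) + w n' = m"
        using assms[of "n'+2"] less.prems i by simp
      show ?thesis unfolding i using a b c by (simp add: field_simps)
    qed
  qed
qed

lemma Delta2_sum:
  assumes "1 \<le> k" "k \<le> S"
  shows "Delta2 f k = (\<Sum>i\<in>{0..S+1}. Ecoef k i * f i)"
proof -
  have pt: "Ecoef k i * f i = (if i = k + 1 then f i else 0) - 2 * (if i = k then f i else 0)
       + (if i = k - 1 then f i else 0)" for i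
    unfolding Ecoef_def by auto
  have "(\<Sum>i\<in>{0..S+1}. Ecoef k i * f i) =
     (\<Sum>i\<in>{0..S+1}. (if i = k+1 then f i else 0)) - 2 * (\<Sum>i\<in>{0..S+1}. (if i = k then f i else 0))
     + (\<Sum>i\<in>{0..S+1}. (if i = k - 1 then f i else 0))"
    by (simp only: pt sum.distrib sum_subtractf sum_distrib_left)
  also have "\<dots> = f (k+1) - 2 * f k + f (k - 1)"
    using assms by (simp only: sum.delta finite_atLeastAtMost) simp
  finally show ?thesis unfolding Delta2_def by simp
qed

lemma inv_from_kernel:
  fixes A :: "real mat"
  assumes A: "A \<in> carrier_mat n n"
    and K: "\<And>v. v \<in> carrier_vec n \<Longrightarrow> A *\<^sub>v v = 0\<^sub>v n \<Longrightarrow> v = 0\<^sub>v n"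
  shows "invertible_mat A"
proof -
  have "Determinant.det A \<noteq> 0" using det_0_iff_vec_prod_zero_field[OF A] K by blast
  from det_non_zero_imp_unit[OF A this, of "()"]
  obtain B where "B \<in> carrier_mat n n" "B * A = 1\<^sub>m n" "A * B = 1\<^sub>m n"
    unfolding Units_def ring_mat_def by auto
  then show ?thesis using A unfolding invertible_mat_def inverts_mat_def square_mat.simps
    by auto
qed



lemma gauss_moments:
  assumes P: "prob_space M" and G: "centered_gaussian_rv M X"
  shows "integrable M X" "integrable M (\<lambda>\<omega>. (X \<omega>)^2)" "integral\<^sup>L M X = 0"
proof -
  have G': "X \<in> borel_measurable M \<and> (\<exists>\<sigma>\<ge>0. distr M borel X =
        (if \<sigma> = 0 then return borel 0 else density lborel (normal_density 0 \<sigma>)))"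
    using G unfolding centered_gaussian_rv_def .
  have Xm[measurable]: "X \<in> borel_measurable M" using G' by (rule conjunct1)
  obtain \<sigma> where s: "\<sigma> \<ge> 0" and D: "distr M borel X =
        (if \<sigma> = 0 then return borel 0 else density lborel (normal_density 0 \<sigma>))"
    using G' by (elim conjE exE) (rule that)
  have I: "integrable (distr M borel X) (\<lambda>x. x) \<and> integrable (distr M borel X) (\<lambda>x::real. x^2)
      \<and> integral\<^sup>L (distr M borel X) (\<lambda>x. x) = 0"
  proof (cases "\<sigma> = 0")
    case True
    have D0: "distr M borel X = return borel 0" using True D by simp
    have ae: "AE x in return borel (0::real). x = 0"
      by (simp add: AE_return)
    have "integrable (return borel (0::real)) (\<lambda>x. x)"
      by (rule integrable_cong_AE_imp[of _ "\<lambda>x. 0"]) (use ae in auto)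
    moreover have "integrable (return borel (0::real)) (\<lambda>x. x^2)"
      by (rule integrable_cong_AE_imp[of _ "\<lambda>x. 0"]) (use ae in auto)
    moreover have "integral\<^sup>L (return borel (0::real)) (\<lambda>x. x) = 0"
      by (subst integral_return) auto
    ultimately show ?thesis unfolding D0 by blast
  next
    case False
    then have sp: "\<sigma> > 0" using s by auto
    have D1: "distr M borel X = density lborel (normal_density 0 \<sigma>)" using False D by simp
    have a: "integrable lborel (\<lambda>x. normal_density 0 \<sigma> x * (x - 0)^1)"
      using sp by (rule integrable_normal_moment)
    have b: "integrable lborel (\<lambda>x. normal_density 0 \<sigma> x * (x - 0)^2)"
      using sp by (rule integrable_normal_moment)
    have nn: "AE x in lborel. 0 \<le> normal_density 0 \<sigma> x" by simp
    have nm: "normal_density 0 \<sigma> \<in> borel_measurable lborel" by measurable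
    have m1: "(\<lambda>x::real. x) \<in> borel_measurable lborel" by measurable
    have m2: "(\<lambda>x::real. x^2) \<in> borel_measurable lborel" by measurable
    have e1: "(\<lambda>x. normal_density 0 \<sigma> x *\<^sub>R x) = (\<lambda>x. normal_density 0 \<sigma> x * (x - 0)^1)"
      by simp
    have e2: "(\<lambda>x. normal_density 0 \<sigma> x *\<^sub>R x^2) = (\<lambda>x. normal_density 0 \<sigma> x * (x - 0)^2)"
      by simp
    have e3: "(\<lambda>x. normal_density 0 \<sigma> x *\<^sub>R x) = (\<lambda>x. normal_density 0 \<sigma> x * x)"
      by simp
    have "integral\<^sup>L (density lborel (normal_density 0 \<sigma>)) (\<lambda>x. x) =
          integral\<^sup>L lborel (\<lambda>x. normal_density 0 \<sigma> x *\<^sub>R x)"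
      by (rule integral_density[OF m1 nm nn])
    also have "\<dots> = 0" unfolding e3 by (rule integral_normal_moment_nz_1[OF sp])
    finally have "integral\<^sup>L (density lborel (normal_density 0 \<sigma>)) (\<lambda>x. x) = 0" .
    moreover have "integrable (density lborel (normal_density 0 \<sigma>)) (\<lambda>x::real. x)"
      using a unfolding integrable_density[OF m1 nm nn] e1 .
    moreover have "integrable (density lborel (normal_density 0 \<sigma>)) (\<lambda>x::real. x^2)"
      using b unfolding integrable_density[OF m2 nm nn] e2 .
    ultimately show ?thesis unfolding D1 by blast
  qed
  have m1: "(\<lambda>x::real. x) \<in> borel_measurable borel" by measurable
  have m2: "(\<lambda>x::real. x^2) \<in> borel_measurable borel" by measurable
  show "integrable M X" using iffD1[OF integrable_distr_eq[OF Xm m1]] I by blast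
  show "integrable M (\<lambda>\<omega>. (X \<omega>)^2)" using iffD1[OF integrable_distr_eq[OF Xm m2]] I by blast
  show "integral\<^sup>L M X = 0" using integral_distr[OF Xm m1] I by argo
qed



lemma abs_mult_le_sq: "\<bar>(x::real) * y\<bar> \<le> \<bar>x^2 + y^2\<bar>"
proof -
  have "0 \<le> (\<bar>x\<bar> - \<bar>y\<bar>)^2" by simp
  then have "2 * \<bar>x\<bar> * \<bar>y\<bar> \<le> x^2 + y^2" by (simp add: power2_eq_square algebra_simps)
  moreover have "\<bar>x\<bar> * \<bar>y\<bar> \<le> 2 * \<bar>x\<bar> * \<bar>y\<bar>" by simp
  ultimately have "\<bar>x\<bar> * \<bar>y\<bar> \<le> x^2 + y^2" by linarith
  then show ?thesis by (simp add: abs_mult)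
qed

lemma lin_cov:
  fixes g :: "nat \<Rightarrow> 'a \<Rightarrow> real"
  assumes fin: "finite I"
    and gm: "\<And>i. i \<in> I \<Longrightarrow> g i \<in> borel_measurable M"
    and gi: "\<And>i. i \<in> I \<Longrightarrow> integrable M (g i)"
    and g2: "\<And>i. i \<in> I \<Longrightarrow> integrable M (\<lambda>\<omega>. (g i \<omega>)^2)"
    and g0: "\<And>i. i \<in> I \<Longrightarrow> integral\<^sup>L M (g i) = 0"
  shows "cov M (\<lambda>\<omega>. \<Sum>i\<in>I. a i * g i \<omega>) (\<lambda>\<omega>. \<Sum>j\<in>I. b j * g j \<omega>)
       = (\<Sum>i\<in>I. \<Sum>j\<in>I. a i * b j * cov M (g i) (g j))"
proof -
  have ip: "integrable M (\<lambda>\<omega>. g i \<omega> * g j \<omega>)" if "i \<in> I" "j \<in> I" for i j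
  proof (rule Bochner_Integration.integrable_bound[where f="\<lambda>\<omega>. (g i \<omega>)^2 + (g j \<omega>)^2"])
    show "integrable M (\<lambda>\<omega>. (g i \<omega>)^2 + (g j \<omega>)^2)"
      using g2 that by (intro Bochner_Integration.integrable_add) auto
    show "(\<lambda>\<omega>. g i \<omega> * g j \<omega>) \<in> borel_measurable M"
      using gm that by (intro borel_measurable_times) auto
    show "AE \<omega> in M. norm (g i \<omega> * g j \<omega>) \<le> norm ((g i \<omega>)^2 + (g j \<omega>)^2)"
      by (intro AE_I2) (simp only: real_norm_def abs_mult_le_sq)
  qed
  have mean: "integral\<^sup>L M (\<lambda>\<omega>. \<Sum>i\<in>I. c i * g i \<omega>) = 0" for c
  proof -
    have "integral\<^sup>L M (\<lambda>\<omega>. \<Sum>i\<in>I. c i * g i \<omega>) = (\<Sum>i\<in>I. integral\<^sup>L M (\<lambda>\<omega>. c i * g i \<omega>))"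
      by (rule Bochner_Integration.integral_sum[where f="\<lambda>i \<omega>. c i * g i \<omega>"]) (use gi in auto)
    also have "\<dots> = (\<Sum>i\<in>I. c i * integral\<^sup>L M (g i))"
      by (rule sum.cong) (simp_all only: integral_mult_right_zero)
    also have "\<dots> = 0" using g0 by simp
    finally show ?thesis .
  qed
  have covg: "cov M (g i) (g j) = integral\<^sup>L M (\<lambda>\<omega>. g i \<omega> * g j \<omega>)" if "i \<in> I" "j \<in> I" for i j
    unfolding cov_def using g0 that by simp
  have "cov M (\<lambda>\<omega>. \<Sum>i\<in>I. a i * g i \<omega>) (\<lambda>\<omega>. \<Sum>j\<in>I. b j * g j \<omega>)
      = integral\<^sup>L M (\<lambda>\<omega>. (\<Sum>i\<in>I. a i * g i \<omega>) * (\<Sum>j\<in>I. b j * g j \<omega>))"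
    unfolding cov_def mean by simp
  also have "\<dots> = integral\<^sup>L M (\<lambda>\<omega>. \<Sum>i\<in>I. \<Sum>j\<in>I. a i * b j * (g i \<omega> * g j \<omega>))"
    by (rule Bochner_Integration.integral_cong) (simp_all add: sum_product algebra_simps)
  also have "\<dots> = (\<Sum>i\<in>I. integral\<^sup>L M (\<lambda>\<omega>. \<Sum>j\<in>I. a i * b j * (g i \<omega> * g j \<omega>)))"
    by (rule Bochner_Integration.integral_sum[where f="\<lambda>i \<omega>. \<Sum>j\<in>I. a i * b j * (g i \<omega> * g j \<omega>)"]) (use ip in auto)
  also have "\<dots> = (\<Sum>i\<in>I. \<Sum>j\<in>I. integral\<^sup>L M (\<lambda>\<omega>. a i * b j * (g i \<omega> * g j \<omega>)))"
    by (rule sum.cong[OF refl], rule Bochner_Integration.integral_sum[where f="\<lambda>j \<omega>. a _ * b j * (g _ \<omega> * g j \<omega>)"]) (use ip in auto)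
  also have "\<dots> = (\<Sum>i\<in>I. \<Sum>j\<in>I. a i * b j * cov M (g i) (g j))"
    by (intro sum.cong refl) (simp only: integral_mult_right_zero covg)
  finally show ?thesis .
qed



lemma sum4_swap:
  "(\<Sum>k\<in>A. \<Sum>l\<in>B. \<Sum>i\<in>C. \<Sum>j\<in>D. F k l i j) = (\<Sum>i\<in>C. \<Sum>j\<in>D. \<Sum>k\<in>A. \<Sum>l\<in>B. F k l i j)"
proof -
  have "(\<Sum>k\<in>A. \<Sum>l\<in>B. \<Sum>i\<in>C. \<Sum>j\<in>D. F k l i j) = (\<Sum>k\<in>A. \<Sum>i\<in>C. \<Sum>l\<in>B. \<Sum>j\<in>D. F k l i j)"
    by (rule sum.cong[OF refl], rule sum.swap)
  also have "\<dots> = (\<Sum>k\<in>A. \<Sum>i\<in>C. \<Sum>j\<in>D. \<Sum>l\<in>B. F k l i j)"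
    by (rule sum.cong[OF refl], rule sum.cong[OF refl], rule sum.swap)
  also have "\<dots> = (\<Sum>i\<in>C. \<Sum>k\<in>A. \<Sum>j\<in>D. \<Sum>l\<in>B. F k l i j)"
    by (rule sum.swap)
  also have "\<dots> = (\<Sum>i\<in>C. \<Sum>j\<in>D. \<Sum>k\<in>A. \<Sum>l\<in>B. F k l i j)"
    by (rule sum.cong[OF refl], rule sum.swap)
  finally show ?thesis .
qed

lemma kernel_zero:
  fixes p :: "nat \<Rightarrow> real" and v :: "real vec"
  assumes S0: "S > 0"
    and ppos: "\<And>i. i \<le> S \<Longrightarrow> p i > 0"
    and pS: "p (S+1) = 0"
    and psum: "(\<Sum>i\<in>{0..S+1}. p i) = 1"
    and v: "v \<in> carrier_vec S"
    and Av: "mat S S (\<lambda>(k,l). \<Sum>i\<in>{0..S+1}. \<Sum>j\<in>{0..S+1}. Ecoef (k+1) i * Ecoef (l+1) j *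
               ((if i = j then p i else 0) - p i * p j)) *\<^sub>v v = 0\<^sub>v S"
  shows "v = 0\<^sub>v S"
proof -
  define I where "I = {0..S+1}"
  have finI: "finite I" unfolding I_def by simp
  define C where "C i j = (if i = j then p i else 0) - p i * p j" for i j
  define X where "X k l = (\<Sum>i\<in>I. \<Sum>j\<in>I. Ecoef (k+1) i * Ecoef (l+1) j * C i j)" for k l
  define d where "d i = (\<Sum>k<S. v$k * Ecoef (k+1) i)" for i
  define m where "m = (\<Sum>i\<in>I. d i * p i)"
  have Av': "mat S S (\<lambda>(k,l). X k l) *\<^sub>v v = 0\<^sub>v S"
    using Av unfolding X_def C_def I_def .
  have dv: "dim_vec v = S" using v by simp
  have row: "(\<Sum>l<S. X k l * v$l) = 0" if "k < S" for k
  proof -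
    have "(mat S S (\<lambda>(k,l). X k l) *\<^sub>v v) $ k = 0" using Av' that by simp
    then show ?thesis using that dv
      by (simp add: scalar_prod_def lessThan_atLeast0)
  qed
  have "0 = (\<Sum>k<S. v$k * (\<Sum>l<S. X k l * v$l))" using row by simp
  also have "\<dots> = (\<Sum>k<S. \<Sum>l<S. \<Sum>i\<in>I. \<Sum>j\<in>I.
        (v$k * Ecoef (k+1) i) * (v$l * Ecoef (l+1) j) * C i j)"
    unfolding X_def by (simp add: sum_distrib_left sum_distrib_right mult_ac)
  also have "\<dots> = (\<Sum>i\<in>I. \<Sum>j\<in>I. \<Sum>k<S. \<Sum>l<S.
        (v$k * Ecoef (k+1) i) * (v$l * Ecoef (l+1) j) * C i j)"
    by (rule sum4_swap)
  also have "\<dots> = (\<Sum>i\<in>I. \<Sum>j\<in>I. d i * d j * C i j)"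
  proof (intro sum.cong refl)
    fix i j
    show "(\<Sum>k<S. \<Sum>l<S. (v$k * Ecoef (k+1) i) * (v$l * Ecoef (l+1) j) * C i j) = d i * d j * C i j"
      by (simp only: d_def sum_product) (simp only: sum_distrib_right)
  qed
  finally have Q: "(\<Sum>i\<in>I. \<Sum>j\<in>I. d i * d j * C i j) = 0" by simp
  have pt1: "d i * d j * C i j = (if i = j then d i * d i * p i else 0) - (d i * p i) * (d j * p j)" for i j
    unfolding C_def by (simp add: algebra_simps)
  have "(\<Sum>i\<in>I. \<Sum>j\<in>I. d i * d j * C i j) = (\<Sum>i\<in>I. d i * d i * p i) - m * m"
    unfolding pt1 sum_subtractf m_def sum_product
    by (simp add: sum.delta finI)
  with Q have Q2: "(\<Sum>i\<in>I. d i * d i * p i) - m * m = 0" by simp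
  have pt2: "p i * (d i - m)^2 = d i * d i * p i - 2 * m * (d i * p i) + m * m * p i" for i
    by (simp add: power2_eq_square algebra_simps)
  have "(\<Sum>i\<in>I. p i * (d i - m)^2) = (\<Sum>i\<in>I. d i * d i * p i) - 2 * m * m + m * m * 1"
    unfolding pt2 sum.distrib sum_subtractf sum_distrib_left[symmetric] m_def[symmetric]
    using psum unfolding I_def by simp
  with Q2 have V: "(\<Sum>i\<in>I. p i * (d i - m)^2) = 0" by simp
  have pnn: "\<forall>i\<in>I. 0 \<le> p i * (d i - m)^2"
  proof
    fix i assume "i \<in> I"
    then have "i \<le> S \<or> i = S + 1" unfolding I_def by auto
    then have "0 \<le> p i" using ppos pS by (auto intro: less_imp_le)
    then show "0 \<le> p i * (d i - m)^2" by simp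
  qed
  have dm: "d i = m" if "i \<le> S" for i
  proof -
    have all0: "\<forall>x\<in>I. p x * (d x - m)^2 = 0"
      using sum_nonneg_eq_0_iff[OF finI, of "\<lambda>i. p i * (d i - m)^2"] V pnn by blast
    have "i \<in> I" using that unfolding I_def by simp
    then have "p i * (d i - m)^2 = 0" using all0 by blast
    then show ?thesis using ppos[OF that] by simp
  qed
  define w where "w j = (if j < S then v$j else 0)" for j
  have wrec: "w i - 2 * (if 1 \<le> i then w (i - 1) else 0) + (if 2 \<le> i then w (i - 2) else 0) = m"
    if "i \<le> S" for i
  proof -
    have "d i = w i - 2 * (if 1 \<le> i then w (i - 1) else 0) + (if 2 \<le> i then w (i - 2) else 0)"
      unfolding d_def d_formula[where v="\<lambda>k. v$k" and S=S and i=i] w_def by auto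
    then show ?thesis using dm[OF that] by simp
  qed
  have wq: "w i = m * (real i + 1) * (real i + 2) / 2" if "i \<le> S" for i
    using recur[of S w m, OF wrec that] by simp
  have "w S = 0" unfolding w_def by simp
  with wq[of S] have "m * (real S + 1) * (real S + 2) = 0" by simp
  then have m0: "m = 0" by (simp add: add_nonneg_eq_0_iff)
  show ?thesis
  proof (rule eq_vecI)
    show "dim_vec v = dim_vec (0\<^sub>v S)" using dv by simp
    fix j assume "j < dim_vec (0\<^sub>v S)"
    then have j: "j < S" by simp
    have "w j = 0" using wq[of j] j m0 by simp
    then show "v $ j = 0\<^sub>v S $ j" using j unfolding w_def by simp
  qed
qed


theorem lemma2:
  fixes M :: "'a measure" and p0 :: "nat pmf" and S :: nat and g0 :: "'a \<Rightarrow> nat \<Rightarrow> real"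
  assumes "prob_space M"
    and "S > 0"
    and "set_pmf p0 = {0..S}"
    and "centered_gaussian_vec M {0..S+1} g0"
    and "\<And>i j. i \<le> S + 1 \<Longrightarrow> j \<le> S + 1 \<Longrightarrow>
           cov M (\<lambda>\<omega>. g0 \<omega> i) (\<lambda>\<omega>. g0 \<omega> j) = (if i = j then pmf p0 i else 0) - pmf p0 i * pmf p0 j"
  shows "centered_gaussian_vec M {1..S} (\<lambda>\<omega>. Delta2 (g0 \<omega>))
       \<and> invertible_mat (mat S S (\<lambda>(i, j).
             cov M (\<lambda>\<omega>. Delta2 (g0 \<omega>) (i + 1)) (\<lambda>\<omega>. Delta2 (g0 \<omega>) (j + 1))))"
proof -
  note P = assms(1) and S0 = assms(2) and sp = assms(3) and gv = assms(4) and cv = assms(5)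
  define I where "I = {0..S+1}"
  have finI: "finite I" unfolding I_def by simp
  have gvc: "centered_gaussian_rv M (\<lambda>\<omega>. \<Sum>i\<in>I. c i * g0 \<omega> i)" for c
    using gv unfolding centered_gaussian_vec_def I_def by blast
  have gi: "centered_gaussian_rv M (\<lambda>\<omega>. g0 \<omega> i)" if "i \<in> I" for i
  proof -
    have "(\<lambda>\<omega>. \<Sum>j\<in>I. (if j = i then 1 else 0) * g0 \<omega> j) = (\<lambda>\<omega>. g0 \<omega> i)"
    proof
      fix \<omega>
      have "(\<Sum>j\<in>I. (if j = i then 1 else 0) * g0 \<omega> j) = (\<Sum>j\<in>I. (if j = i then g0 \<omega> j else 0))"
        by (rule sum.cong) simp_all
      also have "\<dots> = g0 \<omega> i" using that finI by (simp only: sum.delta) simp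
      finally show "(\<Sum>j\<in>I. (if j = i then 1 else 0) * g0 \<omega> j) = g0 \<omega> i" .
    qed
    then show ?thesis using gvc[of "\<lambda>j. if j = i then 1 else 0"] by simp
  qed
  have gm: "(\<lambda>\<omega>. g0 \<omega> i) \<in> borel_measurable M" if "i \<in> I" for i
    using gi[OF that] unfolding centered_gaussian_rv_def by (rule conjunct1)
  note mom = gauss_moments[OF P gi]
  have lin: "cov M (\<lambda>\<omega>. \<Sum>i\<in>I. a i * g0 \<omega> i) (\<lambda>\<omega>. \<Sum>j\<in>I. b j * g0 \<omega> j)
       = (\<Sum>i\<in>I. \<Sum>j\<in>I. a i * b j * cov M (\<lambda>\<omega>. g0 \<omega> i) (\<lambda>\<omega>. g0 \<omega> j))" for a b
    using lin_cov[where g="\<lambda>i \<omega>. g0 \<omega> i" and I=I and M=M and a=a and b=b, OF finI gm mom] .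
  have D: "(\<lambda>\<omega>. Delta2 (g0 \<omega>) k) = (\<lambda>\<omega>. \<Sum>i\<in>I. Ecoef k i * g0 \<omega> i)" if "1 \<le> k" "k \<le> S" for k
    unfolding I_def using Delta2_sum[OF that] by blast
  have part1: "centered_gaussian_vec M {1..S} (\<lambda>\<omega>. Delta2 (g0 \<omega>))"
    unfolding centered_gaussian_vec_def
  proof (intro conjI allI)
    show "finite {1..S}" by simp
    fix c :: "nat \<Rightarrow> real"
    define d where "d i = (\<Sum>k\<in>{1..S}. c k * Ecoef k i)" for i
    have "(\<lambda>\<omega>. \<Sum>k\<in>{1..S}. c k * Delta2 (g0 \<omega>) k) = (\<lambda>\<omega>. \<Sum>i\<in>I. d i * g0 \<omega> i)"
    proof
      fix \<omega>
      have "(\<Sum>k\<in>{1..S}. c k * Delta2 (g0 \<omega>) k) = (\<Sum>k\<in>{1..S}. c k * (\<Sum>i\<in>I. Ecoef k i * g0 \<omega> i))"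
      proof (rule sum.cong[OF refl])
        fix k assume "k \<in> {1..S}"
        then show "c k * Delta2 (g0 \<omega>) k = c k * (\<Sum>i\<in>I. Ecoef k i * g0 \<omega> i)"
          using D[of k] by (auto dest: fun_cong[where x=\<omega>])
      qed
      also have "\<dots> = (\<Sum>k\<in>{1..S}. \<Sum>i\<in>I. c k * Ecoef k i * g0 \<omega> i)"
        by (simp only: sum_distrib_left mult.assoc)
      also have "\<dots> = (\<Sum>i\<in>I. \<Sum>k\<in>{1..S}. c k * Ecoef k i * g0 \<omega> i)"
        by (rule sum.swap)
      also have "\<dots> = (\<Sum>i\<in>I. d i * g0 \<omega> i)"
        unfolding d_def by (simp only: sum_distrib_right)
      finally show "(\<Sum>k\<in>{1..S}. c k * Delta2 (g0 \<omega>) k) = (\<Sum>i\<in>I. d i * g0 \<omega> i)" .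
    qed
    then show "centered_gaussian_rv M (\<lambda>\<omega>. \<Sum>k\<in>{1..S}. c k * Delta2 (g0 \<omega>) k)"
      using gvc[of d] by simp
  qed
  define p where "p i = pmf p0 i" for i
  have ppos: "p i > 0" if "i \<le> S" for i
    using that sp unfolding p_def by (simp add: pmf_positive_iff)
  have "S+1 \<notin> set_pmf p0" using sp by simp
  then have pS: "p (S+1) = 0" unfolding p_def set_pmf_iff by simp
  have psum: "(\<Sum>i\<in>{0..S+1}. p i) = 1"
    unfolding p_def by (rule sum_pmf_eq_1) (use sp in auto)
  have Meq: "mat S S (\<lambda>(i, j).
             cov M (\<lambda>\<omega>. Delta2 (g0 \<omega>) (i + 1)) (\<lambda>\<omega>. Delta2 (g0 \<omega>) (j + 1)))
     = mat S S (\<lambda>(k,l). \<Sum>i\<in>{0..S+1}. \<Sum>j\<in>{0..S+1}. Ecoef (k+1) i * Ecoef (l+1) j *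
               ((if i = j then p i else 0) - p i * p j))"
  proof (rule cong_mat[OF refl refl])
    fix k l assume kl: "k < S" "l < S"
    have "cov M (\<lambda>\<omega>. Delta2 (g0 \<omega>) (k + 1)) (\<lambda>\<omega>. Delta2 (g0 \<omega>) (l + 1))
       = cov M (\<lambda>\<omega>. \<Sum>i\<in>I. Ecoef (k+1) i * g0 \<omega> i) (\<lambda>\<omega>. \<Sum>j\<in>I. Ecoef (l+1) j * g0 \<omega> j)"
      using D[of "k+1"] D[of "l+1"] kl by simp
    also have "\<dots> = (\<Sum>i\<in>I. \<Sum>j\<in>I. Ecoef (k+1) i * Ecoef (l+1) j * cov M (\<lambda>\<omega>. g0 \<omega> i) (\<lambda>\<omega>. g0 \<omega> j))"
      by (rule lin)
    also have "\<dots> = (\<Sum>i\<in>{0..S+1}. \<Sum>j\<in>{0..S+1}. Ecoef (k+1) i * Ecoef (l+1) j *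
               ((if i = j then p i else 0) - p i * p j))"
      unfolding I_def p_def by (intro sum.cong refl) (simp add: cv)
    finally show "(\<lambda>(i, j). cov M (\<lambda>\<omega>. Delta2 (g0 \<omega>) (i + 1)) (\<lambda>\<omega>. Delta2 (g0 \<omega>) (j + 1))) (k, l) =
          (\<lambda>(k,l). \<Sum>i\<in>{0..S+1}. \<Sum>j\<in>{0..S+1}. Ecoef (k+1) i * Ecoef (l+1) j *
               ((if i = j then p i else 0) - p i * p j)) (k, l)" by simp
  qed
  have part2: "invertible_mat (mat S S (\<lambda>(i, j).
             cov M (\<lambda>\<omega>. Delta2 (g0 \<omega>) (i + 1)) (\<lambda>\<omega>. Delta2 (g0 \<omega>) (j + 1))))"
    unfolding Meq
  proof (rule inv_from_kernel)
    show "mat S S (\<lambda>(k,l). \<Sum>i\<in>{0..S+1}. \<Sum>j\<in>{0..S+1}. Ecoef (k+1) i * Ecoef (l+1) j *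
               ((if i = j then p i else 0) - p i * p j)) \<in> carrier_mat S S" by simp
    fix v :: "real vec"
    assume vc: "v \<in> carrier_vec S" and Av: "mat S S (\<lambda>(k,l). \<Sum>i\<in>{0..S+1}. \<Sum>j\<in>{0..S+1}. Ecoef (k+1) i * Ecoef (l+1) j *
               ((if i = j then p i else 0) - p i * p j)) *\<^sub>v v = 0\<^sub>v S"
    show "v = 0\<^sub>v S" by (rule kernel_zero[OF S0 ppos pS psum vc Av])
  qed
  show ?thesis using part1 part2 by blast
qed

end
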